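(* For every simple graph $G$, $e(G)\leq(\Delta(G)+1)M(G)$, where $\Delta(G)$ is the maximum degree and $M(G)$ the size of a maximum matching. Furthermore, for every integer $k\geq 7$, \[\mathcal{E}_{P_1\cup P_2}(k)=\begin{cases}k^2-\frac32 k & k\text{ even},\\ k^2-k & k\text{ odd}.\end{cases}\]
   Context: $P_1\cup P_2$ is the vertex-disjoint union of a single edge and a path with two edges. Graphs are simple, 2-uniform, without isolated vertices. $\operatorname{ex}(G,H)$ is the maximum number of edges of a subgraph of $G$ containing no copy of $H$, and $\mathcal{E}_H(k):=\sup\{e(G): G\text{ simple}, \operatorname{ex}(G,H)<k\}$. *)

theory Defs
  imports Main "HOL-Library.Extended_Nat"
begin

text \<open>A (finite) simple graph without isolated vertices is given by its edge set:
  a finite set of 2-element vertex sets. Its vertex set is the union of the edges.\<close>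

definition simple_graph :: "'a set set \<Rightarrow> bool" where
  "simple_graph E \<longleftrightarrow> finite E \<and> (\<forall>e\<in>E. card e = 2)"

definition num_edges :: "'a set set \<Rightarrow> nat" where
  "num_edges E = card E"

definition degree :: "'a set set \<Rightarrow> 'a \<Rightarrow> nat" where
  "degree E v = card {e \<in> E. v \<in> e}"

definition max_degree :: "'a set set \<Rightarrow> nat" where
  "max_degree E = Max ({degree E v | v. v \<in> \<Union>E} \<union> {0})"

definition is_matching :: "'a set set \<Rightarrow> 'a set set \<Rightarrow> bool" where
  "is_matching E M \<longleftrightarrow> M \<subseteq> E \<and> (\<forall>e\<in>M. \<forall>f\<in>M. e \<noteq> f \<longrightarrow> e \<inter> f = {})"

definition matching_number :: "'a set set \<Rightarrow> nat" where
  "matching_number E = Max {card M | M. is_matching E M}"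

text \<open>The edge set F contains a copy of P_1 \<union> P_2: an edge e1 vertex-disjoint
  from a path e2 e3 with two edges (two distinct edges sharing a vertex).\<close>

definition contains_P1P2 :: "'a set set \<Rightarrow> bool" where
  "contains_P1P2 F \<longleftrightarrow> (\<exists>e1\<in>F. \<exists>e2\<in>F. \<exists>e3\<in>F.
      e2 \<noteq> e3 \<and> e2 \<inter> e3 \<noteq> {} \<and> e1 \<inter> (e2 \<union> e3) = {})"

definition ex_P1P2 :: "'a set set \<Rightarrow> nat" where
  "ex_P1P2 E = Max {card F | F. F \<subseteq> E \<and> \<not> contains_P1P2 F}"

text \<open>\<E>_{P_1 \<union> P_2}(k) = sup of e(G) over simple graphs G with ex(G,H) < k
  (graphs taken up to isomorphism, i.e. on vertex set nat), valued in enat.\<close>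

definition extremal_E_P1P2 :: "nat \<Rightarrow> enat" where
  "extremal_E_P1P2 k = Sup ((\<lambda>E. enat (num_edges E)) `
      {E :: nat set set. simple_graph E \<and> ex_P1P2 E < k})"

end

theory Submission
  imports Defs
begin


lemma sg_fin: "simple_graph E \<Longrightarrow> finite E" by (simp add: simple_graph_def)
lemma sg_card: "simple_graph E \<Longrightarrow> e \<in> E \<Longrightarrow> card e = 2" by (simp add: simple_graph_def)
lemma sg_sub: "simple_graph E \<Longrightarrow> F \<subseteq> E \<Longrightarrow> simple_graph F"
  by (auto simp: simple_graph_def intro: finite_subset)
lemma card2_fin: "card e = 2 \<Longrightarrow> finite e" by (metis card.infinite zero_neq_numeral)
lemma sg_Union_fin: "simple_graph E \<Longrightarrow> finite (\<Union>E)"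
  by (auto simp: simple_graph_def intro: card2_fin)
lemma card2_ex: "card e = 2 \<Longrightarrow> a \<in> e \<Longrightarrow> \<exists>b. b \<noteq> a \<and> e = {a,b}"
  by (metis card_2_iff insert_commute insertE singletonD)

lemma matching_fin: "simple_graph E \<Longrightarrow> finite {card M | M. is_matching E M}"
proof -
  assume "simple_graph E"
  then have "finite (Pow E)" by (simp add: sg_fin)
  moreover have "{card M | M. is_matching E M} \<subseteq> card ` Pow E" by (auto simp: is_matching_def)
  ultimately show ?thesis by (meson finite_surj)
qed

lemma matching_le: "simple_graph E \<Longrightarrow> is_matching E M \<Longrightarrow> card M \<le> matching_number E"
  unfolding matching_number_def using matching_fin by (blast intro: Max_ge)

lemma matching_ex: "simple_graph E \<Longrightarrow> \<exists>M. is_matching E M \<and> card M = matching_number E"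
proof -
  assume a: "simple_graph E"
  have "is_matching E {}" by (simp add: is_matching_def)
  then have "{card M | M. is_matching E M} \<noteq> {}" by blast
  from Max_in[OF matching_fin[OF a] this] show ?thesis unfolding matching_number_def by auto
qed

lemma deg_fin: "finite E \<Longrightarrow> finite {e \<in> E. v \<in> e}" by simp

lemma degree_le_max: "simple_graph E \<Longrightarrow> degree E v \<le> max_degree E"
proof (cases "v \<in> \<Union>E")
  case True
  assume a: "simple_graph E"
  have "finite {degree E v | v. v \<in> \<Union>E}" proof -
    have "{degree E v | v. v \<in> \<Union>E} = degree E ` (\<Union>E)" by blast
    then show ?thesis using sg_Union_fin[OF a] by simp
  qed
  then show ?thesis unfolding max_degree_def using True by (intro Max_ge) auto
next
  case False
  then have "{e \<in> E. v \<in> e} = {}" by auto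
  then have "degree E v = 0" unfolding degree_def by (metis card.empty)
  then show ?thesis by simp
qed

lemma max_degree_le: "simple_graph E \<Longrightarrow> (\<And>v. degree E v \<le> D) \<Longrightarrow> max_degree E \<le> D"
proof -
  assume a: "simple_graph E" and b: "\<And>v. degree E v \<le> D"
  have "finite {degree E v | v. v \<in> \<Union>E}" proof -
    have "{degree E v | v. v \<in> \<Union>E} = degree E ` (\<Union>E)" by blast
    then show ?thesis using sg_Union_fin[OF a] by simp
  qed
  then show ?thesis unfolding max_degree_def using b by (subst Max_le_iff) auto
qed

lemma is_matching_local: "finite X \<Longrightarrow> is_matching E X \<longleftrightarrow> X \<subseteq> E \<and> (\<forall>v. degree X v \<le> 1)"
proof -
  assume f: "finite X"
  have "(\<forall>e\<in>X. \<forall>f\<in>X. e \<noteq> f \<longrightarrow> e \<inter> f = {}) \<longleftrightarrow> (\<forall>v. degree X v \<le> 1)"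
  proof
    assume h: "\<forall>e\<in>X. \<forall>f\<in>X. e \<noteq> f \<longrightarrow> e \<inter> f = {}"
    show "\<forall>v. degree X v \<le> 1"
    proof
      fix v
      have "\<forall>e\<in>{e \<in> X. v \<in> e}. \<forall>f\<in>{e \<in> X. v \<in> e}. e = f" using h by blast
      then show "degree X v \<le> 1" unfolding degree_def by (simp add: card_le_Suc0_iff_eq f)
    qed
  next
    assume h: "\<forall>v. degree X v \<le> 1"
    show "\<forall>e\<in>X. \<forall>f\<in>X. e \<noteq> f \<longrightarrow> e \<inter> f = {}"
    proof (intro ballI impI)
      fix e f assume "e \<in> X" "f \<in> X" "e \<noteq> f"
      show "e \<inter> f = {}"
      proof (rule ccontr)
        assume "e \<inter> f \<noteq> {}"
        then obtain v where "v \<in> e" "v \<in> f" by blast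
        have "degree X v \<le> 1" using h by blast
        then have "\<forall>e\<in>{e \<in> X. v \<in> e}. \<forall>f\<in>{e \<in> X. v \<in> e}. e = f"
          unfolding degree_def by (simp add: card_le_Suc0_iff_eq f)
        then show False using \<open>e \<in> X\<close> \<open>f \<in> X\<close> \<open>v\<in>e\<close> \<open>v\<in>f\<close> \<open>e\<noteq>f\<close> by blast
      qed
    qed
  qed
  then show ?thesis by (simp add: is_matching_def)
qed

lemma matching_Union_card: "simple_graph E \<Longrightarrow> is_matching E M \<Longrightarrow> card (\<Union>M) = 2 * card M"
proof -
  assume a: "simple_graph E" and m: "is_matching E M"
  have fM: "finite M" using m a by (meson is_matching_def sg_fin finite_subset)
  have "card (\<Union>M) = sum card M"
    using m a by (intro card_Union_disjoint) (auto simp: pairwise_def disjnt_def is_matching_def dest: sg_card intro: card2_fin)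
  also have "\<dots> = sum (\<lambda>_. 2) M" using m a by (intro sum.cong) (auto simp: is_matching_def dest: sg_card)
  finally show ?thesis by simp
qed

lemma matching_vertices: "simple_graph E \<Longrightarrow> is_matching E M \<Longrightarrow> 2 * card M \<le> card (\<Union>E)"
  by (metis Union_mono card_mono is_matching_def matching_Union_card sg_Union_fin)

lemma cover_bound: assumes "finite C" "is_matching E M" "\<And>e. e \<in> M \<Longrightarrow> e \<inter> C \<noteq> {}"
  shows "card M \<le> card C"
proof -
  define g where "g e = (SOME x. x \<in> e \<inter> C)" for e
  have g: "g e \<in> e \<inter> C" if "e \<in> M" for e using assms(3)[OF that] unfolding g_def by (metis some_in_eq)
  have "inj_on g M"
  proof
    fix e f assume "e \<in> M" "f \<in> M" "g e = g f"
    then show "e = f" using g assms(2) unfolding is_matching_def by (metis IntE disjoint_iff)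
  qed
  moreover have "g ` M \<subseteq> C" using g by blast
  ultimately show ?thesis using assms(1) by (metis card_inj_on_le)
qed




lemma degree_insert: "finite P \<Longrightarrow> g \<notin> P \<Longrightarrow>
   degree (insert g P) w = (if w \<in> g then Suc (degree P w) else degree P w)"
proof -
  assume f: "finite P" and g: "g \<notin> P"
  show ?thesis
  proof (cases "w \<in> g")
    case True
    then have "{e \<in> insert g P. w \<in> e} = insert g {e \<in> P. w \<in> e}" by auto
    then show ?thesis using True f g by (simp add: degree_def)
  next
    case False
    then have "{e \<in> insert g P. w \<in> e} = {e \<in> P. w \<in> e}" by auto
    then show ?thesis using False by (simp add: degree_def)
  qed
qed

lemma degree_0_iff: "finite P \<Longrightarrow> degree P w = 0 \<longleftrightarrow> w \<notin> \<Union>P"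
  by (auto simp: degree_def)

lemma degree_mono: "finite S \<Longrightarrow> P \<subseteq> S \<Longrightarrow> degree P w \<le> degree S w"
  unfolding degree_def by (rule card_mono) auto

definition inv_path :: "'a set set \<Rightarrow> 'a \<Rightarrow> 'a set set \<Rightarrow> 'a \<Rightarrow> bool" where
  "inv_path S u P y \<longleftrightarrow> P \<subseteq> S \<and> y \<in> \<Union>P \<and> u \<noteq> y \<and> degree P u = 1 \<and> degree P y = 1 \<and>
     (\<forall>z\<in>\<Union>P. z \<noteq> u \<and> z \<noteq> y \<longrightarrow> degree P z = 2)"

definition closed_in :: "'a set set \<Rightarrow> 'a set set \<Rightarrow> bool" where
  "closed_in S P \<longleftrightarrow> P \<subseteq> S \<and> (\<forall>y\<in>\<Union>P. \<forall>e\<in>S. y \<in> e \<longrightarrow> e \<in> P)"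

lemma path_grow:
  assumes fS: "finite S" and c2: "\<And>e. e \<in> S \<Longrightarrow> card e = 2" and d2: "\<And>w. degree S w \<le> 2"
    and du: "degree S u = 1"
  shows "inv_path S u P y \<Longrightarrow> \<exists>P' x. closed_in S P' \<and> u \<in> \<Union>P' \<and>
            (\<forall>z\<in>\<Union>P'. degree S z = 1 \<longrightarrow> z = u \<or> z = x)"
proof (induction "card S - card P" arbitrary: P y rule: less_induct)
  case less
  have inv: "inv_path S u P y" by fact
  then have PS: "P \<subseteq> S" and yP: "y \<in> \<Union>P" and uy: "u \<noteq> y" and dPu: "degree P u = 1"
    and dPy: "degree P y = 1" and dPz: "\<And>z. z\<in>\<Union>P \<Longrightarrow> z \<noteq> u \<Longrightarrow> z \<noteq> y \<Longrightarrow> degree P z = 2"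
    unfolding inv_path_def by blast+
  have fP: "finite P" using PS fS finite_subset by blast
  have uP: "u \<in> \<Union>P" using dPu degree_0_iff[OF fP, of u] by simp
  have eqS: "{e \<in> P. z \<in> e} = {e \<in> S. z \<in> e}" if "degree P z = degree S z" for z
    using that PS fS unfolding degree_def by (intro card_subset_eq) auto
  show ?case
  proof (cases "\<exists>g\<in>S - P. y \<in> g")
    case False
    have cl: "closed_in S P"
      unfolding closed_in_def
    proof (intro conjI ballI impI PS)
      fix z e assume zP: "z \<in> \<Union>P" and eS: "e \<in> S" and ze: "z \<in> e"
      show "e \<in> P"
      proof (cases "z = y")
        case True then show ?thesis using False eS ze by blast
      next
        case zy: False
        have "degree P z = degree S z"
        proof (cases "z = u")
          case True then show ?thesis using dPu du degree_mono[OF fS PS, of u]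
            by (metis degree_0_iff[OF fP] le_antisym le_less_Suc_eq uP One_nat_def)
        next
          case False then show ?thesis using dPz[OF zP False zy] d2[of z] degree_mono[OF fS PS, of z] by simp
        qed
        then show ?thesis using eqS eS ze by blast
      qed
    qed
    have "\<forall>z\<in>\<Union>P. degree S z = 1 \<longrightarrow> z = u \<or> z = y"
      using dPz degree_mono[OF fS PS] by (metis Suc_1 not_less_eq_eq order_refl One_nat_def)
    then show ?thesis using cl uP by blast
  next
    case True
    then obtain g where gS: "g \<in> S" and gP: "g \<notin> P" and yg: "y \<in> g" by blast
    obtain z where zy: "z \<noteq> y" and gz: "g = {y, z}" using card2_ex[OF c2[OF gS] yg] by blast
    have dins: "degree (insert g P) w = (if w \<in> g then Suc (degree P w) else degree P w)" for w
      using degree_insert[OF fP gP] .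
    have znP: "z \<notin> \<Union>P"
    proof
      assume zP: "z \<in> \<Union>P"
      have "degree (insert g P) z \<le> degree S z" using gS PS by (intro degree_mono[OF fS]) auto
      moreover have "z \<in> g" using gz by simp
      ultimately have "Suc (degree P z) \<le> degree S z" using dins[of z] by simp
      moreover have "degree P z \<ge> 1" using zP degree_0_iff[OF fP, of z] by simp
      moreover have "z = u \<or> degree P z = 2" using dPz zP zy by blast
      ultimately show False using du d2[of z] by auto
    qed
    have uz: "u \<noteq> z" using uP znP by blast
    have inv': "inv_path S u (insert g P) z"
      unfolding inv_path_def
    proof (intro conjI ballI impI)
      show "insert g P \<subseteq> S" using gS PS by blast
      show "z \<in> \<Union>(insert g P)" using gz by blast
      show "u \<noteq> z" by fact
      show "degree (insert g P) u = 1" using dins[of u] dPu uy uz gz by simp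
      show "degree (insert g P) z = 1" using dins[of z] degree_0_iff[OF fP, of z] znP gz by simp
    next
      fix w assume "w \<in> \<Union>(insert g P)" "w \<noteq> u \<and> w \<noteq> z"
      then show "degree (insert g P) w = 2"
        using dins[of w] dPz[of w] dPy gz by (cases "w = y") auto
    qed
    have "card P < card (insert g P)" using gP fP by simp
    moreover have "card (insert g P) \<le> card S" using gS PS fS by (intro card_mono) auto
    ultimately have "card S - card (insert g P) < card S - card P" by linarith
    then show ?thesis using less.hyps inv' by blast
  qed
qed

lemma path_exists:
  assumes fS: "finite S" and c2: "\<And>e. e \<in> S \<Longrightarrow> card e = 2" and d2: "\<And>w. degree S w \<le> 2"
    and du: "degree S u = 1"
  shows "\<exists>P x. closed_in S P \<and> u \<in> \<Union>P \<and> (\<forall>z\<in>\<Union>P. degree S z = 1 \<longrightarrow> z = u \<or> z = x)"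
proof -
  have "{e \<in> S. u \<in> e} \<noteq> {}" using du unfolding degree_def by (metis card.empty zero_neq_one)
  then obtain g where gS: "g \<in> S" and ug: "u \<in> g" by blast
  obtain y where yu: "y \<noteq> u" and gy: "g = {u, y}" using card2_ex[OF c2[OF gS] ug] by blast
  have "degree {g} w = (if w \<in> g then 1 else 0)" for w
  proof (cases "w \<in> g")
    case True then have "{e \<in> {g}. w \<in> e} = {g}" by auto
    then show ?thesis using True unfolding degree_def by simp
  next
    case False then have "{e \<in> {g}. w \<in> e} = {}" by auto
    then show ?thesis using False unfolding degree_def by simp
  qed
  then have "inv_path S u {g} y" unfolding inv_path_def using gS gy yu by auto
  then show ?thesis using path_grow[OF assms] by blast
qed




definition maxm :: "'a set set \<Rightarrow> 'a set set \<Rightarrow> bool" where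
  "maxm E X \<longleftrightarrow> is_matching E X \<and> card X = matching_number E"

lemma maxm_ex: "simple_graph E \<Longrightarrow> \<exists>M. maxm E M"
  using matching_ex by (auto simp: maxm_def)

lemma matching_finite: "simple_graph E \<Longrightarrow> is_matching E M \<Longrightarrow> finite M"
  by (meson is_matching_def sg_fin finite_subset)

lemma matching_deg: "simple_graph E \<Longrightarrow> is_matching E M \<Longrightarrow> degree M y \<le> 1"
  using is_matching_local matching_finite by blast

lemma no_adj_missed:
  assumes sg: "simple_graph E" and m: "maxm E M" and ab: "{a,b} \<in> E" and a: "a \<notin> \<Union>M" and b: "b \<notin> \<Union>M"
  shows False
proof -
  have mm: "is_matching E M" and cM: "card M = matching_number E" using m by (auto simp: maxm_def)
  have fM: "finite M" using matching_finite[OF sg mm] .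
  have n: "{a,b} \<notin> M" using a by blast
  have "is_matching E (insert {a,b} M)"
    using mm ab a b unfolding is_matching_def by blast
  then have "card (insert {a,b} M) \<le> matching_number E" using matching_le[OF sg] by blast
  then show False using n fM cM by simp
qed

lemma swap_local:
  assumes cl: "closed_in ((M - N) \<union> (N - M)) P"
  shows "{e \<in> (M - P) \<union> (P - M). y \<in> e} = (if y \<in> \<Union>P then {e \<in> N. y \<in> e} else {e \<in> M. y \<in> e})"
proof -
  have cl1: "\<And>e. e \<in> P \<Longrightarrow> e \<in> (M - N) \<union> (N - M)"
    and cl2: "\<And>e. y \<in> \<Union>P \<Longrightarrow> e \<in> (M - N) \<union> (N - M) \<Longrightarrow> y \<in> e \<Longrightarrow> e \<in> P"
    using cl unfolding closed_in_def by blast+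
  show ?thesis
  proof (cases "y \<in> \<Union>P")
    case True
    show ?thesis
    proof (simp only: True if_True, intro equalityI subsetI)
      fix e assume "e \<in> {e \<in> (M - P) \<union> (P - M). y \<in> e}"
      then show "e \<in> {e \<in> N. y \<in> e}" using cl1 cl2[OF True] by blast
    next
      fix e assume "e \<in> {e \<in> N. y \<in> e}"
      then show "e \<in> {e \<in> (M - P) \<union> (P - M). y \<in> e}" using cl1 cl2[OF True] by blast
    qed
  next
    case False
    show ?thesis
    proof (simp only: False if_False, intro equalityI subsetI)
      fix e assume "e \<in> {e \<in> (M - P) \<union> (P - M). y \<in> e}"
      then show "e \<in> {e \<in> M. y \<in> e}" using False by blast
    next
      fix e assume "e \<in> {e \<in> M. y \<in> e}"
      then show "e \<in> {e \<in> (M - P) \<union> (P - M). y \<in> e}" using False by blast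
    qed
  qed
qed

lemma swap_cover:
  assumes cl: "closed_in ((M - N) \<union> (N - M)) P"
  shows "y \<in> \<Union>((M - P) \<union> (P - M)) \<longleftrightarrow> (if y \<in> \<Union>P then y \<in> \<Union>N else y \<in> \<Union>M)"
proof -
  have h: "y \<in> \<Union>X \<longleftrightarrow> {e \<in> X. y \<in> e} \<noteq> {}" for X :: "'a set set" by blast
  show ?thesis
  proof (cases "y \<in> \<Union>P")
    case True
    then have "\<forall>e. (e \<in> (M - P) \<union> (P - M) \<and> y \<in> e) \<longleftrightarrow> (e \<in> N \<and> y \<in> e)"
      using swap_local[OF cl, of y] by (simp add: set_eq_iff)
    then show ?thesis using True by (simp only: if_True) blast
  next
    case False
    then have "\<forall>e. (e \<in> (M - P) \<union> (P - M) \<and> y \<in> e) \<longleftrightarrow> (e \<in> M \<and> y \<in> e)"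
      using swap_local[OF cl, of y] by (simp add: set_eq_iff)
    then show ?thesis using False by (simp only: if_False) blast
  qed
qed

lemma closed_sym: "closed_in ((M - N) \<union> (N - M)) P \<Longrightarrow> closed_in ((N - M) \<union> (M - N)) P"
  by (metis Un_commute)

lemma swap_matching:
  assumes sg: "simple_graph E" and mM: "is_matching E M" and mN: "is_matching E N"
    and cl: "closed_in ((M - N) \<union> (N - M)) P"
  shows "is_matching E ((M - P) \<union> (P - M))"
proof -
  have fM: "finite M" using matching_finite[OF sg mM] .
  have fN: "finite N" using matching_finite[OF sg mN] .
  have PS: "P \<subseteq> M \<union> N" using cl unfolding closed_in_def by blast
  have fP: "finite P" using PS fM fN by (meson finite_Un finite_Diff finite_subset)
  have "M \<subseteq> E" "N \<subseteq> E" using mM mN unfolding is_matching_def by simp_all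
  then have sub: "(M - P) \<union> (P - M) \<subseteq> E" using PS by blast
  have "degree ((M - P) \<union> (P - M)) y \<le> 1" for y
    using swap_local[OF cl, of y] matching_deg[OF sg mM, of y] matching_deg[OF sg mN, of y]
    unfolding degree_def by (cases "y \<in> \<Union>P") (simp_all only: if_True if_False)
  moreover have "finite ((M - P) \<union> (P - M))" using fM fP by simp
  ultimately show ?thesis using is_matching_local[of "(M - P) \<union> (P - M)" E] sub by simp
qed

lemma swap_max:
  assumes sg: "simple_graph E" and mM: "maxm E M" and mN: "maxm E N"
    and cl: "closed_in ((M - N) \<union> (N - M)) P"
  shows "maxm E ((M - P) \<union> (P - M))" "maxm E ((N - P) \<union> (P - N))"
proof -
  have iM: "is_matching E M" and iN: "is_matching E N" and cM: "card M = matching_number E"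
    and cN: "card N = matching_number E" using mM mN by (auto simp: maxm_def)
  have fM: "finite M" and fN: "finite N" using matching_finite sg iM iN by blast+
  have PS: "P \<subseteq> (M - N) \<union> (N - M)" using cl unfolding closed_in_def by blast
  have fP: "finite P" using PS fM fN by (meson finite_Un finite_Diff finite_subset)
  have A: "is_matching E ((M - P) \<union> (P - M))" using swap_matching[OF sg iM iN cl] .
  have B: "is_matching E ((N - P) \<union> (P - N))" using swap_matching[OF sg iN iM closed_sym[OF cl]] .
  have cA: "card ((M - P) \<union> (P - M)) = card (M - P) + card (P - M)"
    using fM fP by (intro card_Un_disjoint) auto
  have cB: "card ((N - P) \<union> (P - N)) = card (N - P) + card (P - N)"
    using fN fP by (intro card_Un_disjoint) auto
  have c1: "card M = card (M - P) + card (P - N)"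
  proof -
    have "M = (M - P) \<union> (P - N)" using PS by blast
    moreover have "(M - P) \<inter> (P - N) = {}" by blast
    ultimately show ?thesis using fM fP card_Un_disjoint[of "M - P" "P - N"] by simp
  qed
  have c2: "card N = card (N - P) + card (P - M)"
  proof -
    have "N = (N - P) \<union> (P - M)" using PS by blast
    moreover have "(N - P) \<inter> (P - M) = {}" by blast
    ultimately show ?thesis using fN fP card_Un_disjoint[of "N - P" "P - M"] by simp
  qed
  have "card ((M - P) \<union> (P - M)) \<le> matching_number E" using matching_le[OF sg A] .
  moreover have "card ((N - P) \<union> (P - N)) \<le> matching_number E" using matching_le[OF sg B] .
  ultimately have "card ((M - P) \<union> (P - M)) = matching_number E \<and> card ((N - P) \<union> (P - N)) = matching_number E"
    using cA cB c1 c2 cM cN by linarith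
  then show "maxm E ((M - P) \<union> (P - M))" "maxm E ((N - P) \<union> (P - N))" using A B by (auto simp: maxm_def)
qed




lemma deg_S_one:
  assumes sg: "simple_graph E" and iM: "is_matching E M" and iN: "is_matching E N"
    and yN: "y \<in> \<Union>N" and yM: "y \<notin> \<Union>M"
  shows "degree ((M - N) \<union> (N - M)) y = 1"
proof -
  have "{e \<in> (M - N) \<union> (N - M). y \<in> e} = {e \<in> N. y \<in> e}" using yM by blast
  moreover have "degree N y \<le> 1" using matching_deg[OF sg iN] .
  moreover have "{e \<in> N. y \<in> e} \<noteq> {}" using yN by blast
  moreover have "finite N" using matching_finite[OF sg iN] .
  moreover have "card {e \<in> N. y \<in> e} \<noteq> 0" using \<open>finite N\<close> \<open>{e \<in> N. y \<in> e} \<noteq> {}\<close> by simp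
  ultimately show ?thesis unfolding degree_def by (metis le_antisym less_one not_le)
qed

lemma deg_S_two:
  assumes sg: "simple_graph E" and iM: "is_matching E M" and iN: "is_matching E N"
  shows "degree ((M - N) \<union> (N - M)) y \<le> 2"
proof -
  have fM: "finite M" using matching_finite[OF sg iM] .
  have fN: "finite N" using matching_finite[OF sg iN] .
  have "{e \<in> (M - N) \<union> (N - M). y \<in> e} \<subseteq> {e \<in> M. y \<in> e} \<union> {e \<in> N. y \<in> e}" by blast
  then have "degree ((M - N) \<union> (N - M)) y \<le> card ({e \<in> M. y \<in> e} \<union> {e \<in> N. y \<in> e})"
    unfolding degree_def using fM fN by (intro card_mono) auto
  also have "\<dots> \<le> degree M y + degree N y" unfolding degree_def by (rule card_Un_le)
  also have "\<dots> \<le> 2" using matching_deg[OF sg iM, of y] matching_deg[OF sg iN, of y] by simp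
  finally show ?thesis .
qed

lemma gallai_step:
  assumes sg: "simple_graph E" and mM: "maxm E M" and uM: "u \<notin> \<Union>M" and vM: "v \<notin> \<Union>M"
    and uv: "u \<noteq> v" and uw: "{u,w} \<in> E" and mN: "maxm E N" and wN: "w \<notin> \<Union>N"
  shows "w \<noteq> v \<and> (\<exists>N'. maxm E N' \<and> w \<notin> \<Union>N' \<and> v \<notin> \<Union>N')"
proof -
  have iM: "is_matching E M" and iN: "is_matching E N" using mM mN by (auto simp: maxm_def)
  have fM: "finite M" using matching_finite[OF sg iM] .
  have fN: "finite N" using matching_finite[OF sg iN] .
  have wv: "w \<noteq> v" using no_adj_missed[OF sg mM uw uM] vM by blast
  have uN: "u \<in> \<Union>N" using no_adj_missed[OF sg mN uw] wN by blast
  have wM: "w \<in> \<Union>M" using no_adj_missed[OF sg mM uw uM] by blast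
  show ?thesis
  proof (cases "v \<in> \<Union>N")
    case False then show ?thesis using wv mN wN by blast
  next
    case vN: True
    define S where "S = (M - N) \<union> (N - M)"
    have SS: "S = (N - M) \<union> (M - N)" unfolding S_def by blast
    have fS: "finite S" unfolding S_def using fM fN by simp
    have SE: "S \<subseteq> E" unfolding S_def using iM iN unfolding is_matching_def by blast
    have c2: "\<And>e. e \<in> S \<Longrightarrow> card e = 2" using SE sg sg_card by blast
    have d2: "\<And>y. degree S y \<le> 2" unfolding S_def using deg_S_two[OF sg iM iN] .
    have du: "degree S u = 1" unfolding S_def using deg_S_one[OF sg iM iN uN uM] .
    have dv: "degree S v = 1" unfolding S_def using deg_S_one[OF sg iM iN vN vM] .
    have dw: "degree S w = 1" unfolding SS using deg_S_one[OF sg iN iM wM wN] .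
    obtain P x where cl: "closed_in S P" and uP: "u \<in> \<Union>P"
      and one: "\<And>z. z \<in> \<Union>P \<Longrightarrow> degree S z = 1 \<Longrightarrow> z = u \<or> z = x"
      using path_exists[OF fS c2 d2 du] by blast
    have cl1: "closed_in ((M - N) \<union> (N - M)) P" using cl unfolding S_def .
    have cl2: "closed_in ((N - M) \<union> (M - N)) P" using closed_sym[OF cl1] .
    have mA: "maxm E ((M - P) \<union> (P - M))" and mB: "maxm E ((N - P) \<union> (P - N))"
      using swap_max[OF sg mM mN cl1] by auto
    have covA: "\<And>y. y \<in> \<Union>((M - P) \<union> (P - M)) \<longleftrightarrow> (if y \<in> \<Union>P then y \<in> \<Union>N else y \<in> \<Union>M)"
      using swap_cover[OF cl1] .
    have covB: "\<And>y. y \<in> \<Union>((N - P) \<union> (P - N)) \<longleftrightarrow> (if y \<in> \<Union>P then y \<in> \<Union>M else y \<in> \<Union>N)"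
      using swap_cover[OF cl2] .
    have wP: "w \<in> \<Union>P"
    proof (rule ccontr)
      assume "w \<notin> \<Union>P"
      then have "w \<notin> \<Union>((N - P) \<union> (P - N))" using covB[of w] wN by simp
      moreover have "u \<notin> \<Union>((N - P) \<union> (P - N))" using covB[of u] uP uM by simp
      ultimately show False using no_adj_missed[OF sg mB uw] by blast
    qed
    have wu: "w \<noteq> u" using wM uM by blast
    have wx: "w = x" using one[OF wP dw] wu by blast
    have vP: "v \<notin> \<Union>P"
    proof
      assume "v \<in> \<Union>P"
      then have "v = u \<or> v = x" using one dv by blast
      then show False using uv wx wv by blast
    qed
    have "w \<notin> \<Union>((M - P) \<union> (P - M))" using covA[of w] wP wN by simp
    moreover have "v \<notin> \<Union>((M - P) \<union> (P - M))" using covA[of v] vP vM by simp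
    ultimately show ?thesis using wv mA by blast
  qed
qed

definition connected_g :: "'a set set \<Rightarrow> bool" where
  "connected_g E \<longleftrightarrow> (\<forall>E1 \<subseteq> E. \<Union>E1 \<inter> \<Union>(E - E1) = {} \<longrightarrow> E1 = {} \<or> E1 = E)"

lemma gallai:
  assumes sg: "simple_graph E" and con: "connected_g E"
    and ine: "\<And>y. y \<in> \<Union>E \<Longrightarrow> \<exists>N. maxm E N \<and> y \<notin> \<Union>N"
    and mM: "maxm E M"
  shows "card (\<Union>E - \<Union>M) \<le> 1"
proof (rule ccontr)
  assume "\<not> card (\<Union>E - \<Union>M) \<le> 1"
  then obtain u v where uE: "u \<in> \<Union>E" and vE: "v \<in> \<Union>E" and uM: "u \<notin> \<Union>M" and vM: "v \<notin> \<Union>M"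
    and uv: "u \<noteq> v"
    by (metis (no_types, lifting) DiffE card_le_Suc0_iff_eq not_less_eq_eq One_nat_def sg sg_Union_fin finite_Diff)
  define A where "A = {x \<in> \<Union>E. x \<noteq> v \<and> (\<exists>N. maxm E N \<and> x \<notin> \<Union>N \<and> v \<notin> \<Union>N)}"
  have uA: "u \<in> A" unfolding A_def using uE uv uM vM mM by blast
  have vA: "v \<notin> A" unfolding A_def by blast
  have clA: "w \<in> A" if xA: "x \<in> A" and xw: "{x,w} \<in> E" for x w
  proof -
    obtain N where mN: "maxm E N" and xN: "x \<notin> \<Union>N" and vN: "v \<notin> \<Union>N" and xv: "x \<noteq> v"
      using xA unfolding A_def by blast
    have wE: "w \<in> \<Union>E" using xw by blast
    obtain N2 where mN2: "maxm E N2" and wN2: "w \<notin> \<Union>N2" using ine[OF wE] by blast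
    have "w \<noteq> v \<and> (\<exists>N'. maxm E N' \<and> w \<notin> \<Union>N' \<and> v \<notin> \<Union>N')"
      using gallai_step[OF sg mN xN vN xv xw mN2 wN2] .
    then show ?thesis unfolding A_def using wE by blast
  qed
  have clE: "e \<subseteq> A" if eE: "e \<in> E" and eA: "e \<inter> A \<noteq> {}" for e
  proof -
    obtain x where "x \<in> e" "x \<in> A" using eA by blast
    moreover obtain w where "e = {x, w}" using card2_ex[OF sg_card[OF sg \<open>e \<in> E\<close>] \<open>x \<in> e\<close>] by blast
    ultimately show ?thesis using clA \<open>e \<in> E\<close> by blast
  qed
  define E1 where "E1 = {e \<in> E. e \<inter> A \<noteq> {}}"
  have "\<Union>E1 \<inter> \<Union>(E - E1) = {}"
  proof -
    have "\<Union>E1 \<subseteq> A" unfolding E1_def using clE by blast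
    moreover have "\<Union>(E - E1) \<inter> A = {}" unfolding E1_def by blast
    ultimately show ?thesis by blast
  qed
  moreover have "E1 \<subseteq> E" unfolding E1_def by blast
  ultimately have "E1 = {} \<or> E1 = E" using con unfolding connected_g_def by blast
  moreover have "E1 \<noteq> {}" using uE uA unfolding E1_def by blast
  moreover have "E1 \<noteq> E"
  proof -
    obtain e where "e \<in> E" "v \<in> e" using vE by blast
    then have "e \<notin> E1" using clE vA unfolding E1_def by blast
    then show ?thesis using \<open>e \<in> E\<close> by blast
  qed
  ultimately show False by blast
qed

lemma gallai_card:
  assumes sg: "simple_graph E" and con: "connected_g E"
    and ine: "\<And>y. y \<in> \<Union>E \<Longrightarrow> \<exists>N. maxm E N \<and> y \<notin> \<Union>N"
  shows "card (\<Union>E) \<le> 2 * matching_number E + 1"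
proof -
  obtain M where mM: "maxm E M" using maxm_ex[OF sg] by blast
  have iM: "is_matching E M" and cM: "card M = matching_number E" using mM by (auto simp: maxm_def)
  have sub: "\<Union>M \<subseteq> \<Union>E" using iM unfolding is_matching_def by blast
  have f: "finite (\<Union>E)" using sg_Union_fin[OF sg] .
  have "card (\<Union>E) = card (\<Union>M) + card (\<Union>E - \<Union>M)"
    using sub f by (metis card_Diff_subset card_mono finite_subset le_add_diff_inverse)
  then show ?thesis using matching_Union_card[OF sg iM] cM gallai[OF sg con ine mM] by simp
qed




definition fb :: "nat \<Rightarrow> nat \<Rightarrow> nat" where
  "fb D m = D * m + (D div 2) * (m div ((D + 1) div 2))"

lemma fb_mono: "m \<le> m' \<Longrightarrow> fb D m \<le> fb D m'"
  unfolding fb_def by (intro add_mono mult_le_mono div_le_mono) auto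

lemma div_super: "a div (c::nat) + b div c \<le> (a + b) div c"
proof (cases "c = 0")
  case True then show ?thesis by simp
next
  case False
  have "c * (a div c + b div c) \<le> a + b"
    by (metis add_mono distrib_left div_mult_self1_is_m div_times_less_eq_dividend mult.commute)
  then have "(c * (a div c + b div c)) div c \<le> (a + b) div c" by (rule div_le_mono)
  then show ?thesis using False by simp
qed

lemma fb_super: "fb D a + fb D b \<le> fb D (a + b)"
proof -
  have "(D div 2) * (a div ((D + 1) div 2)) + (D div 2) * (b div ((D + 1) div 2))
        \<le> (D div 2) * ((a + b) div ((D + 1) div 2))"
    using div_super[of a "(D + 1) div 2" b] by (metis distrib_left mult_le_mono2)
  then show ?thesis unfolding fb_def by (simp add: distrib_left)
qed

lemma fb_step: "1 \<le> m \<Longrightarrow> fb D (m - 1) + D \<le> fb D m"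
proof -
  assume "1 \<le> m"
  then have "D * (m - 1) + D = D * m" by (metis add.commute mult.commute mult_eq_if not_one_le_zero One_nat_def diff_Suc_1 Suc_pred less_eq_Suc_le)
  moreover have "(D div 2) * ((m - 1) div ((D + 1) div 2)) \<le> (D div 2) * (m div ((D + 1) div 2))"
    by (intro mult_le_mono2 div_le_mono) simp
  ultimately show ?thesis unfolding fb_def by linarith
qed

lemma fb_arith:
  assumes h1: "2 * e \<le> n * D" and h2: "2 * e \<le> n * (n - 1)" and h3: "n \<le> 2 * m + 1"
  shows "e \<le> fb D m"
proof (cases "(D + 1) div 2 \<le> m \<and> 0 < (D + 1) div 2")
  case True
  then have "1 \<le> m div ((D + 1) div 2)" by (simp add: div_le_mono less_eq_div_iff_mult_less_eq)
  then have "D div 2 \<le> (D div 2) * (m div ((D + 1) div 2))" by simp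
  moreover have "2 * e \<le> (2 * m + 1) * D" using h1 h3 by (meson le_trans mult_le_mono1)
  then have "e \<le> D * m + D div 2" by (simp add: algebra_simps)
  ultimately show ?thesis unfolding fb_def by linarith
next
  case False
  show ?thesis
  proof (cases "(D + 1) div 2 = 0")
    case True
    then have "D = 0" by simp
    then show ?thesis using h1 by simp
  next
    case c: False
    then have "m < (D + 1) div 2" using False by simp
    then have mD: "2 * m + 1 \<le> D" by linarith
    have "n * (n - 1) \<le> (2 * m + 1) * (2 * m)" using h3 by (intro mult_le_mono) auto
    then have "2 * e \<le> (2 * m + 1) * (2 * m)" using h2 by linarith
    then have "e \<le> (2 * m + 1) * m" by simp
    also have "\<dots> \<le> D * m" using mD by (intro mult_le_mono1)
    finally show ?thesis unfolding fb_def by simp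
  qed
qed

lemma handshake:
  assumes sg: "simple_graph E"
  shows "2 * card E = (\<Sum>v\<in>\<Union>E. degree E v)"
proof -
  have fE: "finite E" using sg_fin[OF sg] .
  have fV: "finite (\<Union>E)" using sg_Union_fin[OF sg] .
  have "(\<Sum>v\<in>\<Union>E. degree E v) = (\<Sum>v\<in>\<Union>E. \<Sum>e\<in>E. if v \<in> e then 1 else 0)"
    unfolding degree_def using fE by (intro sum.cong refl) (simp add: sum.If_cases Int_def)
  also have "\<dots> = (\<Sum>e\<in>E. \<Sum>v\<in>\<Union>E. if v \<in> e then 1 else 0)" by (rule sum.swap)
  also have "\<dots> = (\<Sum>e\<in>E. card e)"
  proof (intro sum.cong refl)
    fix e assume "e \<in> E"
    then have "\<Union>E \<inter> e = e" by blast
    then show "(\<Sum>v\<in>\<Union>E. if v \<in> e then 1 else 0) = card e" using fV by (simp add: sum.If_cases)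
  qed
  also have "\<dots> = (\<Sum>e\<in>E. 2)" using sg by (intro sum.cong refl) (simp add: sg_card)
  finally show ?thesis by simp
qed

lemma edges_choose:
  assumes sg: "simple_graph E"
  shows "card E \<le> card (\<Union>E) choose 2"
proof -
  have "E \<subseteq> {B. B \<subseteq> \<Union>E \<and> card B = 2}" using sg by (auto simp: sg_card)
  then have "card E \<le> card {B. B \<subseteq> \<Union>E \<and> card B = 2}"
    using sg_Union_fin[OF sg] by (intro card_mono) auto
  then show ?thesis using n_subsets[OF sg_Union_fin[OF sg]] by simp
qed




lemma degree_sub: "finite E \<Longrightarrow> E' \<subseteq> E \<Longrightarrow> degree E' v \<le> degree E v"
  unfolding degree_def by (rule card_mono) auto

lemma matching_number_sub:
  assumes sg: "simple_graph E" and sub: "E' \<subseteq> E"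
  shows "matching_number E' \<le> matching_number E"
proof -
  have sg': "simple_graph E'" using sg_sub[OF sg sub] .
  obtain M where "is_matching E' M" "card M = matching_number E'" using matching_ex[OF sg'] by blast
  moreover have "is_matching E M" using \<open>is_matching E' M\<close> sub unfolding is_matching_def by blast
  ultimately show ?thesis using matching_le[OF sg] by metis
qed

lemma main_bound:
  shows "simple_graph E \<Longrightarrow> (\<And>v. degree E v \<le> D) \<Longrightarrow> card E \<le> fb D (matching_number E)"
proof (induction "card E" arbitrary: E rule: less_induct)
  case less
  have sg: "simple_graph E" and dD: "\<And>v. degree E v \<le> D" by fact+
  have fE: "finite E" using sg_fin[OF sg] .
  show ?case
  proof (cases "E = {}")
    case True then show ?thesis by simp
  next
    case ne: False
    show ?thesis
    proof (cases "\<exists>v\<in>\<Union>E. \<forall>N. maxm E N \<longrightarrow> v \<in> \<Union>N")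
      case True
      then obtain v where vE: "v \<in> \<Union>E" and ess: "\<And>N. maxm E N \<Longrightarrow> v \<in> \<Union>N" by blast
      define E' where "E' = {e \<in> E. v \<notin> e}"
      have sub: "E' \<subseteq> E" unfolding E'_def by blast
      have sg': "simple_graph E'" using sg_sub[OF sg sub] .
      have cE: "card E = card E' + degree E v"
      proof -
        have "E = E' \<union> {e \<in> E. v \<in> e}" "E' \<inter> {e \<in> E. v \<in> e} = {}" unfolding E'_def by blast+
        then show ?thesis unfolding degree_def using fE card_Un_disjoint
          by (metis (no_types, lifting) finite_Un)
      qed
      have lt: "card E' < card E"
      proof -
        obtain e where "e \<in> E" "v \<in> e" using vE by blast
        then have "E' \<subset> E" unfolding E'_def by blast
        then show ?thesis using fE by (simp add: psubset_card_mono)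
      qed
      have IH: "card E' \<le> fb D (matching_number E')"
        using less.hyps[OF lt sg' le_trans[OF degree_sub[OF fE sub] dD]] .
      obtain M' where iM': "is_matching E' M'" and cM': "card M' = matching_number E'"
        using matching_ex[OF sg'] by blast
      have iM'E: "is_matching E M'" using iM' sub unfolding is_matching_def by blast
      have vM': "v \<notin> \<Union>M'" using iM' unfolding is_matching_def E'_def by blast
      have "card M' \<le> matching_number E" using matching_le[OF sg iM'E] .
      moreover have "card M' \<noteq> matching_number E" using ess[of M'] iM'E vM' by (auto simp: maxm_def)
      ultimately have nu: "matching_number E' + 1 \<le> matching_number E" using cM' by linarith
      have "card E \<le> fb D (matching_number E - 1) + D"
        using cE IH fb_mono[of "matching_number E'" "matching_number E - 1" D] nu dD[of v] by linarith
      also have "\<dots> \<le> fb D (matching_number E)" using fb_step nu by simp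
      finally show ?thesis .
    next
      case ine0: False
      have ine: "\<And>y. y \<in> \<Union>E \<Longrightarrow> \<exists>N. maxm E N \<and> y \<notin> \<Union>N" using ine0 by blast
      show ?thesis
      proof (cases "connected_g E")
        case False
        then obtain E1 where E1: "E1 \<subseteq> E" and dis: "\<Union>E1 \<inter> \<Union>(E - E1) = {}" and n1: "E1 \<noteq> {}"
          and n2: "E1 \<noteq> E" unfolding connected_g_def by blast
        define E2 where "E2 = E - E1"
        have sub2: "E2 \<subseteq> E" unfolding E2_def by blast
        have sg1: "simple_graph E1" using sg_sub[OF sg E1] .
        have sg2: "simple_graph E2" using sg_sub[OF sg sub2] .
        have fE1: "finite E1" using finite_subset[OF E1 fE] .
        have lt1: "card E1 < card E" using E1 n2 fE psubset_card_mono[of E E1] by blast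
        have lt2: "card E2 < card E"
        proof -
          have "E2 \<subset> E" unfolding E2_def using E1 n1 by blast
          then show ?thesis using fE psubset_card_mono[of E E2] by blast
        qed
        have IH1: "card E1 \<le> fb D (matching_number E1)"
          using less.hyps[OF lt1 sg1 le_trans[OF degree_sub[OF fE E1] dD]] .
        have IH2: "card E2 \<le> fb D (matching_number E2)"
          using less.hyps[OF lt2 sg2 le_trans[OF degree_sub[OF fE sub2] dD]] .
        have cE: "card E = card E1 + card E2"
        proof -
          have "E = E1 \<union> E2" "E1 \<inter> E2 = {}" unfolding E2_def using E1 by blast+
          moreover have "finite E2" using finite_subset[OF sub2 fE] .
          ultimately show ?thesis using fE1 card_Un_disjoint[of E1 E2] by simp
        qed
        obtain M1 where iM1: "is_matching E1 M1" and cM1: "card M1 = matching_number E1"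
          using matching_ex[OF sg1] by blast
        obtain M2 where iM2: "is_matching E2 M2" and cM2: "card M2 = matching_number E2"
          using matching_ex[OF sg2] by blast
        have M1E1: "M1 \<subseteq> E1" and M2E2: "M2 \<subseteq> E2" using iM1 iM2 unfolding is_matching_def by simp_all
        have disM: "\<Union>M1 \<inter> \<Union>M2 = {}" using dis M1E1 M2E2 unfolding E2_def by blast
        have iU: "is_matching E (M1 \<union> M2)"
        proof -
          have "\<forall>e\<in>M1. \<forall>f\<in>M1. e \<noteq> f \<longrightarrow> e \<inter> f = {}" "\<forall>e\<in>M2. \<forall>f\<in>M2. e \<noteq> f \<longrightarrow> e \<inter> f = {}"
            using iM1 iM2 unfolding is_matching_def by simp_all
          moreover have "\<forall>e\<in>M1. \<forall>f\<in>M2. e \<inter> f = {}" using disM by blast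
          moreover have "M1 \<union> M2 \<subseteq> E" using M1E1 M2E2 E1 sub2 by blast
          ultimately show ?thesis unfolding is_matching_def by (metis Int_commute Un_iff)
        qed
        have M12: "M1 \<inter> M2 = {}"
        proof -
          have "e \<noteq> {}" if "e \<in> M1" for e using sg_card[OF sg1, of e] that M1E1 by auto
          then show ?thesis using disM by blast
        qed
        have "card (M1 \<union> M2) = card M1 + card M2"
          using M12 matching_finite[OF sg1 iM1] matching_finite[OF sg2 iM2] by (simp add: card_Un_disjoint)
        then have nu: "matching_number E1 + matching_number E2 \<le> matching_number E"
          using matching_le[OF sg iU] cM1 cM2 by simp
        have "card E \<le> fb D (matching_number E1) + fb D (matching_number E2)" using cE IH1 IH2 by simp
        also have "\<dots> \<le> fb D (matching_number E1 + matching_number E2)" by (rule fb_super)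
        also have "\<dots> \<le> fb D (matching_number E)" using fb_mono nu by blast
        finally show ?thesis .
      next
        case con: True
        have n: "card (\<Union>E) \<le> 2 * matching_number E + 1" using gallai_card[OF sg con ine] .
        have h1: "2 * card E \<le> card (\<Union>E) * D"
        proof -
          have "2 * card E = (\<Sum>v\<in>\<Union>E. degree E v)" using handshake[OF sg] .
          also have "\<dots> \<le> (\<Sum>v\<in>\<Union>E. D)" using dD by (intro sum_mono) auto
          finally show ?thesis by simp
        qed
        have h2: "2 * card E \<le> card (\<Union>E) * (card (\<Union>E) - 1)"
        proof -
          have "card E \<le> card (\<Union>E) * (card (\<Union>E) - 1) div 2" using edges_choose[OF sg] by (simp add: choose_two)
          then have "2 * card E \<le> 2 * (card (\<Union>E) * (card (\<Union>E) - 1) div 2)" by simp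
          also have "\<dots> \<le> card (\<Union>E) * (card (\<Union>E) - 1)" by simp
          finally show ?thesis .
        qed
        show ?thesis using fb_arith[OF h1 h2 n] .
      qed
    qed
  qed
qed




lemma part1: "simple_graph E \<Longrightarrow> num_edges E \<le> (max_degree E + 1) * matching_number E"
proof -
  assume sg: "simple_graph E"
  let ?D = "max_degree E" and ?m = "matching_number E"
  have "card E \<le> fb ?D ?m" using main_bound[OF sg degree_le_max[OF sg]] .
  moreover have "(?D div 2) * (?m div ((?D + 1) div 2)) \<le> ?m"
  proof -
    have "(?D div 2) * (?m div ((?D + 1) div 2)) \<le> ((?D + 1) div 2) * (?m div ((?D + 1) div 2))"
      by (intro mult_le_mono1) simp
    also have "\<dots> \<le> ?m" by (simp add: mult.commute div_times_less_eq_dividend)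
    finally show ?thesis .
  qed
  ultimately show ?thesis unfolding fb_def num_edges_def by simp
qed

lemma free_pair:
  assumes nc: "\<not> contains_P1P2 F" and e1: "e1 \<in> F" and ap: "{a,p} \<in> F" and aq: "{a,q} \<in> F" and pq: "p \<noteq> q"
  shows "e1 \<inter> {a,p,q} \<noteq> {}"
proof -
  have "{a,p} \<noteq> {a,q}" using pq by (metis doubleton_eq_iff)
  then show ?thesis
  proof -
    assume ne: "{a,p} \<noteq> {a,q}"
    have "a \<in> {a,p} \<inter> {a,q}" by simp
    then have "{a,p} \<inter> {a,q} \<noteq> {}" by blast
    moreover have "contains_P1P2 F" if h: "e1 \<inter> ({a,p} \<union> {a,q}) = {}"
      unfolding contains_P1P2_def
      apply (rule bexI[OF _ e1]) apply (rule bexI[OF _ ap]) apply (rule bexI[OF _ aq])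
      using ne h \<open>{a,p} \<inter> {a,q} \<noteq> {}\<close> by blast
    ultimately have "e1 \<inter> ({a,p} \<union> {a,q}) \<noteq> {}" using nc by blast
    then show ?thesis by auto
  qed
qed

lemma deg_ge_edges:
  assumes sg: "simple_graph F" and d: "n \<le> degree F a"
  shows "\<exists>S. S \<subseteq> {e \<in> F. a \<in> e} \<and> card S = n"
proof -
  have "finite {e \<in> F. a \<in> e}" using sg_fin[OF sg] by simp
  then show ?thesis using d obtain_subset_with_card_n[of n "{e \<in> F. a \<in> e}"] unfolding degree_def by metis
qed

lemma edge_at:
  assumes sg: "simple_graph F" and e: "e \<in> F" and a: "a \<in> e"
  obtains p where "p \<noteq> a" "e = {a,p}"
  using card2_ex[OF sg_card[OF sg e] a] by blast

lemma card_4_choose: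
  assumes "card S \<le> 4" "finite S" "F \<subseteq> {B. B \<subseteq> S \<and> card B = 2}"
  shows "card F \<le> 6"
proof -
  have "card F \<le> card {B. B \<subseteq> S \<and> card B = 2}" using assms by (intro card_mono) auto
  also have "\<dots> = card S choose 2" using n_subsets[OF assms(2)] .
  also have "\<dots> = card S * (card S - 1) div 2" by (rule choose_two)
  also have "\<dots> \<le> 4 * 3 div 2" using assms(1) by (intro div_le_mono mult_le_mono) auto
  finally show ?thesis by simp
qed

lemma free_char:
  assumes sg: "simple_graph F" and nc: "\<not> contains_P1P2 F"
  shows "is_matching F F \<or> (\<exists>a. \<forall>e\<in>F. a \<in> e) \<or> card F \<le> 6"
proof -
  have fF: "finite F" using sg_fin[OF sg] .
  show ?thesis
  proof (cases "\<forall>v. degree F v \<le> 1")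
    case True then show ?thesis using is_matching_local[OF fF, of F] by simp
  next
    case False
    show ?thesis
    proof (cases "\<exists>a. 3 \<le> degree F a")
      case True
      then obtain a where "3 \<le> degree F a" by blast
      then obtain S where S: "S \<subseteq> {e \<in> F. a \<in> e}" and cS: "card S = 3" using deg_ge_edges[OF sg] by blast
      then obtain e1 e2 e3 where Se: "S = {e1, e2, e3}" and d12: "e1 \<noteq> e2" and d13: "e1 \<noteq> e3" and d23: "e2 \<noteq> e3"
        by (metis card_3_iff)
      have e1F: "e1 \<in> F" "a \<in> e1" and e2F: "e2 \<in> F" "a \<in> e2" and e3F: "e3 \<in> F" "a \<in> e3" using S Se by auto
      obtain p where pa: "p \<noteq> a" and ep: "e1 = {a,p}" using edge_at[OF sg e1F] .
      obtain q where qa: "q \<noteq> a" and eq: "e2 = {a,q}" using edge_at[OF sg e2F] .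
      obtain r where ra: "r \<noteq> a" and er: "e3 = {a,r}" using edge_at[OF sg e3F] .
      have pq: "p \<noteq> q" using d12 ep eq by blast
      have pr: "p \<noteq> r" using d13 ep er by blast
      have qr: "q \<noteq> r" using d23 eq er by blast
      have apF: "{a,p} \<in> F" and aqF: "{a,q} \<in> F" and arF: "{a,r} \<in> F" using e1F e2F e3F ep eq er by auto
      show ?thesis
      proof (cases "\<forall>e\<in>F. a \<in> e")
        case True then show ?thesis by blast
      next
        case False
        then obtain g where gF: "g \<in> F" and ag: "a \<notin> g" by blast
        have gsub: "h \<subseteq> {p,q,r}" if hF: "h \<in> F" and ah: "a \<notin> h" for h
        proof -
          have 1: "h \<inter> {p,q} \<noteq> {}" using free_pair[OF nc hF apF aqF pq] ah by blast
          have 2: "h \<inter> {p,r} \<noteq> {}" using free_pair[OF nc hF apF arF pr] ah by blast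
          have 3: "h \<inter> {q,r} \<noteq> {}" using free_pair[OF nc hF aqF arF qr] ah by blast
          obtain x y where xy: "x \<noteq> y" "h = {x,y}" using sg_card[OF sg hF] by (meson card_2_iff)
          have xin: "x \<in> {p,q,r}"
          proof (rule ccontr)
            assume "x \<notin> {p,q,r}"
            then have "y \<in> {p,q}" "y \<in> {p,r}" "y \<in> {q,r}" using 1 2 3 xy by blast+
            then show False using pq pr qr by blast
          qed
          have yin: "y \<in> {p,q,r}"
          proof (rule ccontr)
            assume "y \<notin> {p,q,r}"
            then have "x \<in> {p,q}" "x \<in> {p,r}" "x \<in> {q,r}" using 1 2 3 xy by blast+
            then show False using pq pr qr by blast
          qed
          show ?thesis using xin yin xy by blast
        qed
        have gs: "g \<subseteq> {p,q,r}" using gsub[OF gF ag] .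
        have cg: "card g = 2" using sg_card[OF sg gF] .
        have star_sub: "e \<subseteq> {a,p,q,r}" if eF: "e \<in> F" for e
        proof (cases "a \<in> e")
          case False then show ?thesis using gsub[OF eF] by blast
        next
          case True
          obtain s where sa: "s \<noteq> a" and es: "e = {a,s}" using edge_at[OF sg eF True] .
          show ?thesis
          proof (rule ccontr)
            assume "\<not> e \<subseteq> {a,p,q,r}"
            then have sn: "s \<notin> {p,q,r}" using es by blast
            have asF: "{a,s} \<in> F" using eF es by simp
            have "g \<inter> {a,p,s} \<noteq> {}" using free_pair[OF nc gF apF asF] sn by blast
            then have "p \<in> g" using ag gs sn by blast
            moreover have "g \<inter> {a,q,s} \<noteq> {}" using free_pair[OF nc gF aqF asF] sn by blast
            then have "q \<in> g" using ag gs sn by blast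
            moreover have "g \<inter> {a,r,s} \<noteq> {}" using free_pair[OF nc gF arF asF] sn by blast
            then have "r \<in> g" using ag gs sn by blast
            ultimately have "{p,q,r} \<subseteq> g" by blast
            then have "card {p,q,r} \<le> card g" using cg card2_fin card_mono by metis
            then show False using cg pq pr qr by simp
          qed
        qed
        have "F \<subseteq> {B. B \<subseteq> {a,p,q,r} \<and> card B = 2}" using star_sub sg_card[OF sg] by blast
        moreover have "card {a,p,q,r} \<le> 4" using card_length[of "[a,p,q,r]"] by simp
        ultimately show ?thesis using card_4_choose by blast
      qed
    next
      case F3: False
      have d2: "degree F v \<le> 2" for v
      proof -
        have "\<not> 3 \<le> degree F v" using F3 by blast
        then show ?thesis by linarith
      qed
      obtain a where "\<not> degree F a \<le> 1" using False by blast
      then have "2 \<le> degree F a" by linarith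
      then obtain S where S: "S \<subseteq> {e \<in> F. a \<in> e}" and cS: "card S = 2" using deg_ge_edges[OF sg] by blast
      then obtain e1 e2 where Se: "S = {e1, e2}" and d12: "e1 \<noteq> e2" by (meson card_2_iff)
      have e1F: "e1 \<in> F" "a \<in> e1" and e2F: "e2 \<in> F" "a \<in> e2" using S Se by auto
      obtain p where pa: "p \<noteq> a" and ep: "e1 = {a,p}" using edge_at[OF sg e1F] .
      obtain q where qa: "q \<noteq> a" and eq: "e2 = {a,q}" using edge_at[OF sg e2F] .
      have pq: "p \<noteq> q" using d12 ep eq by blast
      have apF: "{a,p} \<in> F" and aqF: "{a,q} \<in> F" using e1F e2F ep eq by auto
      have "F \<subseteq> {e \<in> F. a \<in> e} \<union> {e \<in> F. p \<in> e} \<union> {e \<in> F. q \<in> e}"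
        using free_pair[OF nc _ apF aqF pq] by blast
      then have "card F \<le> card ({e \<in> F. a \<in> e} \<union> {e \<in> F. p \<in> e} \<union> {e \<in> F. q \<in> e})"
        using fF by (intro card_mono) auto
      also have "\<dots> \<le> degree F a + degree F p + degree F q" unfolding degree_def
        using card_Un_le[of "{e \<in> F. a \<in> e} \<union> {e \<in> F. p \<in> e}" "{e \<in> F. q \<in> e}"]
          card_Un_le[of "{e \<in> F. a \<in> e}" "{e \<in> F. p \<in> e}"] by linarith
      also have "\<dots> \<le> 6" using d2[of a] d2[of p] d2[of q] by simp
      finally show ?thesis by simp
    qed
  qed
qed




lemma ex_fin: "simple_graph E \<Longrightarrow> finite {card F | F. F \<subseteq> E \<and> \<not> contains_P1P2 F}"
proof -
  assume "simple_graph E"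
  then have "finite (Pow E)" by (simp add: sg_fin)
  moreover have "{card F | F. F \<subseteq> E \<and> \<not> contains_P1P2 F} \<subseteq> card ` Pow E" by auto
  ultimately show ?thesis by (meson finite_surj)
qed

lemma ex_ge: "simple_graph E \<Longrightarrow> F \<subseteq> E \<Longrightarrow> \<not> contains_P1P2 F \<Longrightarrow> card F \<le> ex_P1P2 E"
  unfolding ex_P1P2_def using ex_fin by (blast intro: Max_ge)

lemma ex_le: assumes sg: "simple_graph E" and b: "\<And>F. F \<subseteq> E \<Longrightarrow> \<not> contains_P1P2 F \<Longrightarrow> card F \<le> B"
  shows "ex_P1P2 E \<le> B"
proof -
  have "\<not> contains_P1P2 {}" unfolding contains_P1P2_def by simp
  then have ne: "{card F | F. F \<subseteq> E \<and> \<not> contains_P1P2 F} \<noteq> {}" by blast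
  show ?thesis unfolding ex_P1P2_def using Max_le_iff[OF ex_fin[OF sg] ne] b by blast
qed

lemma star_free: "\<not> contains_P1P2 {e \<in> E. v \<in> e}"
  unfolding contains_P1P2_def by blast

lemma matching_free: "is_matching E M \<Longrightarrow> \<not> contains_P1P2 M"
  unfolding contains_P1P2_def is_matching_def by blast

lemma ex_deg: "simple_graph E \<Longrightarrow> degree E v \<le> ex_P1P2 E"
  unfolding degree_def by (rule ex_ge) (auto simp: star_free)

lemma ex_nu: "simple_graph E \<Longrightarrow> matching_number E \<le> ex_P1P2 E"
proof -
  assume sg: "simple_graph E"
  obtain M where "is_matching E M" "card M = matching_number E" using matching_ex[OF sg] by blast
  then show ?thesis using ex_ge[OF sg] matching_free by (metis is_matching_def)
qed

lemma ex_upper: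
  assumes sg: "simple_graph E" and dD: "\<And>v. degree E v \<le> D" and nu: "matching_number E \<le> m"
  shows "ex_P1P2 E \<le> max D (max m 6)"
proof (rule ex_le[OF sg])
  fix F assume FE: "F \<subseteq> E" and nc: "\<not> contains_P1P2 F"
  have sgF: "simple_graph F" using sg_sub[OF sg FE] .
  have "is_matching F F \<or> (\<exists>a. \<forall>e\<in>F. a \<in> e) \<or> card F \<le> 6" using free_char[OF sgF nc] .
  then show "card F \<le> max D (max m 6)"
  proof (elim disjE exE)
    assume "is_matching F F"
    then have "is_matching E F" using FE unfolding is_matching_def by blast
    then show ?thesis using matching_le[OF sg] nu by fastforce
  next
    fix a assume "\<forall>e\<in>F. a \<in> e"
    then have "F \<subseteq> {e \<in> E. a \<in> e}" using FE by blast
    then have "card F \<le> degree E a" unfolding degree_def using sg_fin[OF sg] by (intro card_mono) auto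
    then show ?thesis using dD[of a] by simp
  next
    assume "card F \<le> 6" then show ?thesis by simp
  qed
qed

lemma fb_k: assumes "7 \<le> k"
  shows "fb (k - 1) (k - 1) = (if even k then k^2 - 3 * k div 2 else k^2 - k)"
proof (cases "even k")
  case True
  then obtain j where k: "k = 2 * j" by blast
  have j: "2 \<le> j" using assms k by simp
  have "(k - 1) div 2 = j - 1" using k j by simp
  moreover have "(k - 1 + 1) div 2 = j" using k j by simp
  moreover have "(k - 1) div j = 1" using k j by (intro div_nat_eqI) auto
  ultimately have "fb (k - 1) (k - 1) = (2*j - 1) * (2*j - 1) + (j - 1)" unfolding fb_def using k by simp
  moreover have "(2*j - 1) * (2*j - 1) + (j - 1) = (2*j)^2 - 3 * (2*j) div 2" using j
    by (simp add: power2_eq_square algebra_simps) (cases j; simp add: algebra_simps)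
  ultimately show ?thesis using True k by simp
next
  case False
  then obtain j where k: "k = 2 * j + 1" using oddE by blast
  have j: "3 \<le> j" using assms k by simp
  have "fb (k - 1) (k - 1) = (2*j) * (2*j) + j * 2" unfolding fb_def using k j by simp
  moreover have "(2*j) * (2*j) + j * 2 = (2*j+1)^2 - (2*j+1)" by (simp add: power2_eq_square algebra_simps)
  ultimately show ?thesis using False k by simp
qed

lemma upper_k:
  assumes sg: "simple_graph E" and ex: "ex_P1P2 E < k" and k: "7 \<le> k"
  shows "card E \<le> (if even k then k^2 - 3 * k div 2 else k^2 - k)"
proof -
  have dD: "degree E v \<le> k - 1" for v using ex_deg[OF sg, of v] ex by linarith
  have nu: "matching_number E \<le> k - 1" using ex_nu[OF sg] ex by linarith
  have "card E \<le> fb (k - 1) (matching_number E)" using main_bound[OF sg dD] .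
  also have "\<dots> \<le> fb (k - 1) (k - 1)" using fb_mono[OF nu] .
  finally show ?thesis using fb_k[OF k] by simp
qed




definition KS :: "'a set \<Rightarrow> 'a set set" where "KS S = {B. B \<subseteq> S \<and> card B = 2}"

lemma KS_sg: "finite S \<Longrightarrow> simple_graph (KS S)"
  unfolding simple_graph_def KS_def by (auto intro: finite_subset)

lemma KS_card: "finite S \<Longrightarrow> card (KS S) = card S choose 2"
  unfolding KS_def by (rule n_subsets)

lemma KS_star: "finite S \<Longrightarrow> y \<in> S \<Longrightarrow> {e \<in> KS S. y \<in> e} = (\<lambda>z. {y,z}) ` (S - {y})"
proof (intro equalityI subsetI)
  fix e assume "e \<in> {e \<in> KS S. y \<in> e}"
  then have eS: "e \<subseteq> S" and ce: "card e = 2" and ye: "y \<in> e" unfolding KS_def by auto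
  obtain z where "z \<noteq> y" "e = {y,z}" using card2_ex[OF ce ye] by blast
  then show "e \<in> (\<lambda>z. {y,z}) ` (S - {y})" using eS by blast
next
  fix e assume "e \<in> (\<lambda>z. {y,z}) ` (S - {y})" and yS: "y \<in> S"
  then obtain z where "z \<in> S" "z \<noteq> y" "e = {y,z}" by blast
  then show "e \<in> {e \<in> KS S. y \<in> e}" using yS unfolding KS_def by auto
qed

lemma KS_deg: assumes "finite S" shows "degree (KS S) y \<le> card S - 1"
proof (cases "y \<in> S")
  case True
  have "degree (KS S) y = card ((\<lambda>z. {y,z}) ` (S - {y}))" unfolding degree_def KS_star[OF assms True] ..
  also have "\<dots> \<le> card (S - {y})" by (rule card_image_le) (simp add: assms)
  finally show ?thesis using True assms by simp
next
  case False
  then have "{e \<in> KS S. y \<in> e} = {}" unfolding KS_def by auto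
  then show ?thesis unfolding degree_def by (metis card.empty zero_le)
qed

lemma KS_deg_eq: assumes "finite S" "y \<in> S" shows "degree (KS S) y = card S - 1"
proof -
  have "inj_on (\<lambda>z. {y,z}) (S - {y})" by (auto simp: inj_on_def doubleton_eq_iff)
  then have "degree (KS S) y = card (S - {y})" unfolding degree_def KS_star[OF assms] by (simp add: card_image)
  then show ?thesis using assms by simp
qed

lemma KS_deg0: "y \<notin> S \<Longrightarrow> degree (KS S) y = 0"
proof -
  assume "y \<notin> S"
  then have "{e \<in> KS S. y \<in> e} = {}" unfolding KS_def by auto
  then show ?thesis unfolding degree_def by (metis card.empty)
qed

lemma nu_vertices: "simple_graph E \<Longrightarrow> \<Union>E \<subseteq> S \<Longrightarrow> finite S \<Longrightarrow> matching_number E \<le> card S div 2"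
proof -
  assume sg: "simple_graph E" and sub: "\<Union>E \<subseteq> S" and f: "finite S"
  obtain M where iM: "is_matching E M" and cM: "card M = matching_number E" using matching_ex[OF sg] by blast
  have "2 * card M \<le> card (\<Union>E)" using matching_vertices[OF sg iM] .
  also have "\<dots> \<le> card S" using sub f by (rule card_mono[rotated])
  finally show ?thesis using cM by linarith
qed

lemma degree_Un: "finite A \<Longrightarrow> finite B \<Longrightarrow> degree (A \<union> B) y \<le> degree A y + degree B y"
proof -
  have "{e \<in> A \<union> B. y \<in> e} = {e \<in> A. y \<in> e} \<union> {e \<in> B. y \<in> e}" by blast
  then show ?thesis unfolding degree_def by (metis card_Un_le)
qed

lemma degree_notin: "y \<notin> \<Union>A \<Longrightarrow> degree A y = 0"
proof -
  assume "y \<notin> \<Union>A"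
  then have "{e \<in> A. y \<in> e} = {}" by blast
  then show ?thesis unfolding degree_def by (metis card.empty)
qed

lemma nu_Un:
  assumes sg: "simple_graph (A \<union> B)"
  shows "matching_number (A \<union> B) \<le> matching_number A + matching_number B"
proof -
  have sgA: "simple_graph A" and sgB: "simple_graph B" using sg_sub[OF sg] by auto
  obtain M where iM: "is_matching (A \<union> B) M" and cM: "card M = matching_number (A \<union> B)"
    using matching_ex[OF sg] by blast
  have fM: "finite M" using matching_finite[OF sg iM] .
  have "is_matching A (M \<inter> A)" using iM unfolding is_matching_def by blast
  then have 1: "card (M \<inter> A) \<le> matching_number A" using matching_le[OF sgA] by blast
  have "is_matching B (M - A)" using iM unfolding is_matching_def by blast
  then have 2: "card (M - A) \<le> matching_number B" using matching_le[OF sgB] by blast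
  have "card M = card (M \<inter> A) + card (M - A)" using fM by (metis card_Int_Diff)
  then show ?thesis using 1 2 cM by linarith
qed




lemma KS_sub: "e \<in> KS S \<Longrightarrow> e \<subseteq> S" unfolding KS_def by auto
lemma KS_Union: "\<Union>(KS S) \<subseteq> S" unfolding KS_def by auto

lemma odd_witness:
  assumes k: "7 \<le> k" and odd: "odd k"
  shows "\<exists>E :: nat set set. simple_graph E \<and> ex_P1P2 E < k \<and> k^2 - k \<le> card E"
proof -
  define A where "A = {..<k}"
  define B where "B = {k..<2*k}"
  define W where "W = KS A \<union> KS B"
  have fA: "finite A" and fB: "finite B" unfolding A_def B_def by auto
  have cA: "card A = k" and cB: "card B = k" unfolding A_def B_def by auto
  have sg: "simple_graph W" unfolding W_def using KS_sg[OF fA] KS_sg[OF fB]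
    by (auto simp: simple_graph_def)
  have fKA: "finite (KS A)" and fKB: "finite (KS B)" using KS_sg[OF fA] KS_sg[OF fB] sg_fin by auto
  have dis: "KS A \<inter> KS B = {}"
  proof -
    have "A \<inter> B = {}" unfolding A_def B_def by auto
    show ?thesis
    proof (rule ccontr)
      assume "KS A \<inter> KS B \<noteq> {}"
      then obtain e where "e \<in> KS A" "e \<in> KS B" by blast
      then have "e \<subseteq> A \<inter> B" "card e = 2" unfolding KS_def by auto
      then show False using \<open>A \<inter> B = {}\<close> by simp
    qed
  qed
  have cW: "card W = k * (k - 1)"
  proof -
    have "card W = card (KS A) + card (KS B)" unfolding W_def using dis fKA fKB by (simp add: card_Un_disjoint)
    also have "\<dots> = 2 * (k choose 2)" using KS_card[OF fA] KS_card[OF fB] cA cB by simp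
    also have "\<dots> = k * (k - 1)"
    proof -
      have "even (k * (k - 1))" by (cases "even k") auto
      then show ?thesis by (simp add: choose_two)
    qed
    finally show ?thesis .
  qed
  have dW: "degree W y \<le> k - 1" for y
  proof -
    have "degree W y \<le> degree (KS A) y + degree (KS B) y" unfolding W_def using degree_Un[OF fKA fKB] .
    moreover have "y \<notin> A \<or> y \<notin> B" unfolding A_def B_def by auto
    ultimately show ?thesis using KS_deg[OF fA, of y] KS_deg[OF fB, of y] KS_deg0[of y A] KS_deg0[of y B] cA cB by auto
  qed
  have nW: "matching_number W \<le> k - 1"
  proof -
    have "matching_number W \<le> matching_number (KS A) + matching_number (KS B)"
      unfolding W_def using nu_Un sg unfolding W_def by blast
    moreover have "matching_number (KS A) \<le> k div 2" using nu_vertices[OF KS_sg[OF fA] KS_Union fA] cA by simp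
    moreover have "matching_number (KS B) \<le> k div 2" using nu_vertices[OF KS_sg[OF fB] KS_Union fB] cB by simp
    moreover have "k div 2 + k div 2 = k - 1" using odd by presburger
    ultimately show ?thesis by linarith
  qed
  have "ex_P1P2 W \<le> max (k - 1) (max (k - 1) 6)" using ex_upper[OF sg dW nW] .
  then have "ex_P1P2 W < k" using k by simp
  moreover have "k^2 - k \<le> card W" using cW by (simp add: power2_eq_square algebra_simps)
  ultimately show ?thesis using sg by blast
qed




lemma card_pair_plus: "1 \<le> (i::nat) \<Longrightarrow> card {a, a + i} = 2" by simp

lemma even_witness:
  assumes k: "7 \<le> k" and ev: "even k"
  shows "\<exists>E :: nat set set. simple_graph E \<and> ex_P1P2 E < k \<and> k^2 - 3 * k div 2 \<le> card E"
proof -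
  obtain j where kj: "k = 2 * j" using ev by blast
  have j4: "4 \<le> j" using k kj by simp
  define m where "m = j - 1"
  define c where "c t = k + 1 + t * k" for t :: nat
  define V where "V = {..k}"
  define R where "R = insert {0,k} ((\<lambda>i. {2*i, 2*i+1}) ` {..<j})"
  define H where "H = KS V - R"
  define SF where "SF = (\<lambda>(t,i). {c t, c t + i}) ` ({..<m} \<times> {1..<k})"
  define W where "W = H \<union> SF"
  have fV: "finite V" and cV: "card V = k + 1" unfolding V_def by auto
  have fKV: "finite (KS V)" using KS_sg[OF fV] sg_fin by blast
  have fH: "finite H" unfolding H_def using fKV by simp
  have fSF: "finite SF" unfolding SF_def by simp
  have HV: "\<Union>H \<subseteq> V" unfolding H_def using KS_Union[of V] by (meson Diff_subset Union_mono order_trans)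
  have SFc: "e \<in> SF \<Longrightarrow> \<exists>t i. t < m \<and> 1 \<le> i \<and> i < k \<and> e = {c t, c t + i}" for e
  proof -
    assume "e \<in> SF"
    then obtain t i where "t < m" "1 \<le> i" "i < k" "e = {c t, c t + i}" unfolding SF_def by auto
    then show ?thesis by blast
  qed
  have SFbig: "e \<in> SF \<Longrightarrow> x \<in> e \<Longrightarrow> k < x" for e x
    using SFc[of e] unfolding c_def by auto
  have sgH: "simple_graph H" unfolding H_def using sg_sub[OF KS_sg[OF fV] Diff_subset] .
  have sgSF: "simple_graph SF" unfolding simple_graph_def using fSF SFc by fastforce
  have sg: "simple_graph W" unfolding W_def using sgH sgSF by (auto simp: simple_graph_def)
  have dis: "H \<inter> SF = {}"
  proof (rule ccontr)
    assume "H \<inter> SF \<noteq> {}"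
    then obtain e where eH: "e \<in> H" and eS: "e \<in> SF" by blast
    obtain t i where "e = {c t, c t + i}" using SFc[OF eS] by blast
    then have "c t \<in> e" by simp
    then show False using HV eH SFbig[OF eS, of "c t"] unfolding V_def by auto
  qed
  have cR: "card R \<le> j + 1"
  proof -
    have "card ((\<lambda>i. {2*i, 2*i+1}) ` {..<j}) \<le> j" using card_image_le[of "{..<j}"] by simp
    moreover have "card R \<le> Suc (card ((\<lambda>i. {2*i, 2*i+1}) ` {..<j}))" unfolding R_def
      by (simp add: card_insert_if)
    ultimately show ?thesis by simp
  qed
  have cH: "(2*j+1) * j \<le> card H + (j + 1)"
  proof -
    have "card (KS V) = (k + 1) choose 2" using KS_card[OF fV] cV by simp
    also have "\<dots> = (2*j+1) * j" using kj by (simp add: choose_two)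
    finally have "card (KS V) = (2*j+1) * j" .
    moreover have "finite R" unfolding R_def by simp
    then have "card (KS V) - card R \<le> card H" unfolding H_def by (rule diff_card_le_card_Diff)
    ultimately show ?thesis using cR by linarith
  qed
  have cSF: "card SF = m * (k - 1)"
  proof -
    have "inj_on (\<lambda>(t,i). {c t, c t + i}) ({..<m} \<times> {1..<k})"
    proof (rule inj_onI)
      fix x y assume xA: "x \<in> {..<m} \<times> {1..<k}" and yA: "y \<in> {..<m} \<times> {1..<k}"
        and eq0: "(\<lambda>(t,i). {c t, c t + i}) x = (\<lambda>(t,i). {c t, c t + i}) y"
      obtain t i where x: "x = (t,i)" by (cases x)
      obtain t' i' where y: "y = (t',i')" by (cases y)
      have i: "1 \<le> i" and i': "1 \<le> i'" using xA yA x y by auto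
      have eq: "{c t, c t + i} = {c t', c t' + i'}" using eq0 x y by simp
      have k0: "0 < k" using k by simp
      have m1: "c t \<in> {c t', c t' + i'}" using eq by blast
      have m2: "c t' \<in> {c t, c t + i}" using eq by blast
      have m3: "c t + i \<in> {c t', c t' + i'}" using eq by blast
      show "x = y"
      proof (cases "c t = c t'")
        case True
        then have "t * k = t' * k" unfolding c_def by simp
        then have tt: "t = t'" using k0 by simp
        have "c t + i \<noteq> c t'" using True i by simp
        then have "c t + i = c t' + i'" using m3 by blast
        then have "i = i'" using True by simp
        then show ?thesis using tt x y by simp
      next
        case False
        then have "c t = c t' + i'" using m1 by blast
        moreover have "c t' = c t + i" using m2 False by auto
        ultimately show ?thesis using i by simp
      qed
    qed
    then have "card SF = card ({..<m} \<times> {1..<k})" unfolding SF_def by (rule card_image)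
    then show ?thesis by simp
  qed
  have cW: "k^2 - 3 * k div 2 \<le> card W"
  proof -
    have "card W = card H + card SF" unfolding W_def using dis fH fSF by (simp add: card_Un_disjoint)
    moreover have "(j - 1) * (2*j - 1) + (2*j+1) * j = (2*j)^2 - 3 * (2*j) div 2 + (j + 1)" using j4
      by (cases j) (simp_all add: algebra_simps power2_eq_square)
    ultimately show ?thesis using cH cSF kj unfolding m_def by simp
  qed
  have dH: "degree H y \<le> k - 1" for y
  proof (cases "y \<in> V")
    case False
    then have "y \<notin> \<Union>H" using HV by blast
    then have "degree H y = 0" by (rule degree_notin)
    then show ?thesis by simp
  next
    case yV: True
    obtain r where rR: "r \<in> R" and rK: "r \<in> KS V" and yr: "y \<in> r"
    proof (cases "y = k")
      case True
      have "{0,k} \<in> KS V" unfolding KS_def V_def using k by auto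
      then show ?thesis using that[of "{0,k}"] True unfolding R_def by simp
    next
      case False
      then have yk: "y < k" using yV unfolding V_def by simp
      define i where "i = y div 2"
      have ij: "i < j" unfolding i_def using yk kj by simp
      have yi: "y = 2*i \<or> y = 2*i+1" unfolding i_def by presburger
      have "2*i+1 \<le> k" using ij kj by simp
      then have "{2*i, 2*i+1} \<in> KS V" unfolding KS_def V_def by auto
      moreover have "{2*i, 2*i+1} \<in> R" unfolding R_def using ij by blast
      ultimately show ?thesis using that yi by blast
    qed
    have "{e \<in> H. y \<in> e} \<subseteq> {e \<in> KS V. y \<in> e} - {r}" unfolding H_def using rR by blast
    then have "degree H y \<le> card ({e \<in> KS V. y \<in> e} - {r})" unfolding degree_def
      using fKV by (intro card_mono) auto
    also have "\<dots> = degree (KS V) y - 1" unfolding degree_def using rK yr fKV by simp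
    also have "\<dots> = k - 1" using KS_deg_eq[OF fV yV] cV by simp
    finally show ?thesis .
  qed
  have dSF: "degree SF y \<le> k - 1" for y
  proof -
    define t0 where "t0 = (y - (k + 1)) div k"
    have "{e \<in> SF. y \<in> e} \<subseteq> (\<lambda>i. {c t0, c t0 + i}) ` {1..<k}"
    proof
      fix e assume "e \<in> {e \<in> SF. y \<in> e}"
      then have eS: "e \<in> SF" and ye: "y \<in> e" by auto
      obtain t i where t: "t < m" and i: "1 \<le> i" "i < k" and e: "e = {c t, c t + i}" using SFc[OF eS] by blast
      have "y = c t \<or> y = c t + i" using ye e by blast
      then have "y - (k + 1) = t * k \<or> y - (k + 1) = t * k + i" unfolding c_def by auto
      moreover have "(t * k) div k = t" using i by simp
      moreover have "(t * k + i) div k = t" using i by (intro div_nat_eqI) auto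
      ultimately have "t0 = t" unfolding t0_def by auto
      then show "e \<in> (\<lambda>i. {c t0, c t0 + i}) ` {1..<k}" using e i by auto
    qed
    moreover have "finite ((\<lambda>i. {c t0, c t0 + i}) ` {1..<k})" by simp
    ultimately have "degree SF y \<le> card ((\<lambda>i. {c t0, c t0 + i}) ` {1..<k})" unfolding degree_def
      by (simp add: card_mono)
    also have "\<dots> \<le> card {1..<k}" by (rule card_image_le) simp
    finally show ?thesis by simp
  qed
  have dW: "degree W y \<le> k - 1" for y
  proof -
    have "degree W y \<le> degree H y + degree SF y" unfolding W_def using degree_Un[OF fH fSF] .
    moreover have "degree H y = 0 \<or> degree SF y = 0"
    proof (cases "k < y")
      case True
      then have "y \<notin> \<Union>H" using HV unfolding V_def by auto
      then have "degree H y = 0" by (rule degree_notin)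
      then show ?thesis by simp
    next
      case False
      have "y \<notin> \<Union>SF"
      proof
        assume "y \<in> \<Union>SF"
        then obtain e where "e \<in> SF" "y \<in> e" by blast
        then show False using SFbig False by blast
      qed
      then have "degree SF y = 0" by (rule degree_notin)
      then show ?thesis by simp
    qed
    ultimately show ?thesis using dH[of y] dSF[of y] by linarith
  qed
  have nH: "matching_number H \<le> j" using nu_vertices[OF sgH HV fV] cV kj by simp
  have nSF: "matching_number SF \<le> m"
  proof -
    obtain M where iM: "is_matching SF M" and cM: "card M = matching_number SF" using matching_ex[OF sgSF] by blast
    have "card M \<le> card (c ` {..<m})"
    proof (rule cover_bound[OF _ iM])
      show "finite (c ` {..<m})" by simp
    next
      fix e assume "e \<in> M"
      then have "e \<in> SF" using iM unfolding is_matching_def by blast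
      then obtain t i where "t < m" "e = {c t, c t + i}" using SFc by blast
      then show "e \<inter> c ` {..<m} \<noteq> {}" by blast
    qed
    also have "\<dots> \<le> m" using card_image_le[of "{..<m}" c] by simp
    finally show ?thesis using cM by simp
  qed
  have nW: "matching_number W \<le> k - 1"
    using nu_Un[of H SF] sg nH nSF unfolding W_def m_def using kj j4 by simp
  have "ex_P1P2 W \<le> max (k - 1) (max (k - 1) 6)" using ex_upper[OF sg dW nW] .
  then have "ex_P1P2 W < k" using k by simp
  then show ?thesis using sg cW by blast
qed


theorem theorem3p20:
  shows "(\<forall>E :: 'a set set. simple_graph E \<longrightarrow>
            num_edges E \<le> (max_degree E + 1) * matching_number E)
       \<and> (\<forall>k::nat. k \<ge> 7 \<longrightarrow>
            extremal_E_P1P2 k =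
              (if even k then enat (k^2 - 3 * k div 2) else enat (k^2 - k)))"
proof (intro conjI allI impI)
  fix E :: "'a set set"
  assume "simple_graph E"
  then show "num_edges E \<le> (max_degree E + 1) * matching_number E" by (rule part1)
next
  fix k :: nat
  assume k: "7 \<le> k"
  define B where "B = (if even k then k^2 - 3 * k div 2 else k^2 - k)"
  have rhs: "(if even k then enat (k^2 - 3 * k div 2) else enat (k^2 - k)) = enat B"
    unfolding B_def by simp
  define A where "A = (\<lambda>E. enat (num_edges E)) ` {E :: nat set set. simple_graph E \<and> ex_P1P2 E < k}"
  have up: "y \<le> enat B" if "y \<in> A" for y
    using that upper_k[OF _ _ k] unfolding A_def B_def num_edges_def by auto
  obtain W :: "nat set set" where W: "simple_graph W" "ex_P1P2 W < k" "B \<le> card W"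
  proof (cases "even k")
    case True then show ?thesis using even_witness[OF k True] that unfolding B_def by auto
  next
    case False then show ?thesis using odd_witness[OF k False] that unfolding B_def by auto
  qed
  have WA: "enat (card W) \<in> A" unfolding A_def num_edges_def using W by blast
  have "Sup A = enat B"
  proof (rule Sup_eqI)
    fix y assume "y \<in> A" then show "y \<le> enat B" by (rule up)
  next
    fix y assume h: "\<And>z. z \<in> A \<Longrightarrow> z \<le> y"
    have "enat B \<le> enat (card W)" using W by simp
    also have "\<dots> \<le> y" using h[OF WA] .
    finally show "enat B \<le> y" .
  qed
  then show "extremal_E_P1P2 k = (if even k then enat (k^2 - 3 * k div 2) else enat (k^2 - k))"
    unfolding extremal_E_P1P2_def rhs A_def .
qed

end
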